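(* Let $\pi>0$, $\bar d>0$, $0<\theta_1<\dots<\theta_K$, $0\le\beta_1<\dots<\beta_M\le1$, and $A:[0,D]\to[0,\bar d]$. For $(Q,\Pi)\in[0,D]\times\mathbb{R}$ and a type $(\beta,\theta)$ let $\bar S(Q,\Pi,\beta,\theta)=\theta[\bar d-\beta A(Q)]-\pi(1-\beta)A(Q)-\Pi$. Then the smallest-payoff user type $\Lambda_\epsilon(Q,\Pi)\in\arg\min_{(\beta_m,\theta_k)}\bar S(Q,\Pi,\beta_m,\theta_k)$ does not depend on $(Q,\Pi)$: there is a single type among the $KM$ types $(\beta_m,\theta_k)$ that minimizes $\bar S(Q,\Pi,\cdot)$ for every $(Q,\Pi)\in[0,D]\times\mathbb{R}$.
   Context: Model: $\pi$ is the overage price, $\bar d$ the mean monthly data demand, $A(Q)$ the expected overage data consumption under data cap $Q$; $\bar S$ is the expected payoff of a type-$(\beta,\theta)$ user (data valuation $\theta$, network substitutability $\beta$) under a plan with cap $Q$ and subscription fee $\Pi$. *)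

theory Defs
  imports Complex_Main
begin

definition Sbar :: "real \<Rightarrow> real \<Rightarrow> (real \<Rightarrow> real) \<Rightarrow> real \<Rightarrow> real \<Rightarrow> real \<Rightarrow> real \<Rightarrow> real" where
  "Sbar p dbar A Q Pi beta theta = theta * (dbar - beta * A Q) - p * (1 - beta) * A Q - Pi"

end

theory Submission
  imports Defs
begin

theorem lemma2:
  fixes p dbar D :: real and K M :: nat
    and theta beta :: "nat \<Rightarrow> real" and A :: "real \<Rightarrow> real"
  assumes "p > 0" and "dbar > 0"
    and "K \<ge> 1" and "M \<ge> 1"
    and "theta 1 > 0" and "strict_mono_on {1..K} theta"
    and "beta 1 \<ge> 0" and "beta M \<le> 1" and "strict_mono_on {1..M} beta"
    and "\<forall>Q\<in>{0..D}. A Q \<in> {0..dbar}"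
  shows "\<exists>m\<in>{1..M}. \<exists>k\<in>{1..K}. \<forall>Q\<in>{0..D}. \<forall>Pi::real.
           \<forall>m'\<in>{1..M}. \<forall>k'\<in>{1..K}.
             Sbar p dbar A Q Pi (beta m) (theta k) \<le> Sbar p dbar A Q Pi (beta m') (theta k')"
proof -
  define m where "m = (if theta 1 \<ge> p then M else 1)"
  have bmono: "beta i \<le> beta j" if "i \<in> {1..M}" "j \<in> {1..M}" "i \<le> j" for i j
    using assms(9) that by (metis order.order_iff_strict strict_mono_onD)
  have tmono: "theta 1 \<le> theta j" if "j \<in> {1..K}" for j
    using assms(3,6) that by (metis atLeastAtMost_iff order.order_iff_strict order_refl strict_mono_onD)
  show ?thesis
  proof (intro bexI ballI allI)
    fix Q Pi m' k' assume Q: "Q \<in> {0..D}" and m': "m' \<in> {1..M}" and k': "k' \<in> {1..K}"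
    have A0: "0 \<le> A Q" "A Q \<le> dbar" using assms(10) Q by auto
    have b0: "0 \<le> beta m'" using bmono[of 1 m'] m' assms(4,7) by auto
    have b1: "beta m' \<le> 1" using bmono[of m' M] m' assms(4,8) by auto
    have "beta m' * A Q \<le> dbar" using A0 b0 b1
      by (metis mult_left_le_one_le order_trans)
    hence s1: "Sbar p dbar A Q Pi (beta m') (theta 1) \<le> Sbar p dbar A Q Pi (beta m') (theta k')"
      using tmono[OF k'] unfolding Sbar_def
      by (smt (verit) mult_right_mono)
    have d: "(theta 1 - p) * (beta m - beta m') \<ge> 0"
    proof (cases "theta 1 \<ge> p")
      case True
      then show ?thesis using m_def bmono[of m' M] m' assms(4) by auto
    next
      case False
      then show ?thesis using m_def bmono[of 1 m'] m' assms(4)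
        by (simp add: mult_nonpos_nonpos)
    qed
    have "Sbar p dbar A Q Pi (beta m') (theta 1) - Sbar p dbar A Q Pi (beta m) (theta 1)
          = A Q * ((theta 1 - p) * (beta m - beta m'))"
      unfolding Sbar_def by (simp add: algebra_simps)
    moreover have "A Q * ((theta 1 - p) * (beta m - beta m')) \<ge> 0" using A0 d by simp
    ultimately show "Sbar p dbar A Q Pi (beta m) (theta 1) \<le> Sbar p dbar A Q Pi (beta m') (theta k')"
      using s1 by linarith
  qed (use assms(3,4) m_def in auto)
qed

end
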